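(* The real flag manifold $\mathbb F_\Theta$ of type $C_4$ with $\Theta=\{\lambda_1-\lambda_2,\lambda_3-\lambda_4\}$ does not admit $K$-invariant almost complex structures.
   Context: $\mathfrak g=\mathfrak{sp}(4,\mathbb R)$ (split real form of type $C_4$) with Iwasawa decomposition $\mathfrak g=\mathfrak k\oplus\mathfrak a\oplus\mathfrak n$, roots $\pm\lambda_i\pm\lambda_j$ ($i<j$), $\pm2\lambda_i$, simple roots $\lambda_1-\lambda_2,\lambda_2-\lambda_3,\lambda_3-\lambda_4,2\lambda_4$. For $\Theta$ a set of simple roots, $\mathfrak p_\Theta=\mathfrak a\oplus\sum_{\alpha>0}\mathfrak g_\alpha\oplus\sum_{\alpha\in\langle\Theta\rangle^-}\mathfrak g_\alpha$ where $\langle\Theta\rangle^-$ are the negative roots generated by $\Theta$; $G$ is the inner automorphism group of $\mathfrak g$, $K$ its maximal compact subgroup, $P_\Theta$ the normalizer of $\mathfrak p_\Theta$ in $G$, $K_\Theta=K\cap P_\Theta$, $\mathbb F_\Theta=G/P_\Theta=K/K_\Theta$. $K$-invariant means invariant under the left action of $K$. *)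

theory Defs
  imports "HOL-Analysis.Analysis"
begin

text \<open>Concrete model: sp(4,R) realised as 8x8 real matrices X with
  X^T Omega + Omega X = 0, Omega = [[0,I],[-I,0]].  The Cartan subspace a
  consists of diag(a1,a2,a3,a4,-a1,-a2,-a3,-a4); lambda_i(H) = a_i.\<close>

type_synonym mat8 = "real ^ 8 ^ 8"

definition Omega :: mat8 where
  "Omega = (\<chi> i j. if j = i + 4 then (if i < 4 then 1 else -1) else 0)"

definition sp_alg :: "mat8 set" where
  "sp_alg = {X. transpose X ** Omega + Omega ** X = 0}"

definition Sp_grp :: "mat8 set" where
  "Sp_grp = {g. transpose g ** Omega ** g = Omega}"

text \<open>Maximal compact subgroup Sp(8,R) \<inter> O(8) (= U(4)); its image under Ad
  is the maximal compact subgroup K of G = Int(g).\<close>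
definition K_grp :: "mat8 set" where
  "K_grp = {k \<in> Sp_grp. transpose k ** k = mat 1}"

definition Ad :: "mat8 \<Rightarrow> mat8 \<Rightarrow> mat8" where
  "Ad g X = g ** X ** matrix_inv g"

definition k_alg :: "mat8 set" where
  "k_alg = {Y \<in> sp_alg. transpose Y = - Y}"

text \<open>Characteristic element H_Theta for Theta = {lambda1-lambda2, lambda3-lambda4}:
  a = (2,2,1,1); the roots of Theta vanish, the other simple roots are positive.\<close>
definition H_Theta :: mat8 where
  "H_Theta = (\<chi> i j. if i = j then
      (if i < 2 then 2 else if i < 4 then 1 else if i < 6 then -2 else -1) else 0)"

text \<open>The flag manifold F_Theta = K/K_Theta realised as the orbit Ad(K) H_Theta
  (K_Theta = centraliser of H_Theta in K), an embedded submanifold of R^(8x8).\<close>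
definition flag_Theta :: "mat8 set" where
  "flag_Theta = {Ad k H_Theta | k. k \<in> K_grp}"

definition tangent_space :: "mat8 \<Rightarrow> mat8 set" where
  "tangent_space x = {Y ** x - x ** Y | Y. Y \<in> k_alg}"

definition almost_complex_structure ::
  "mat8 set \<Rightarrow> (mat8 \<Rightarrow> mat8 set) \<Rightarrow> (mat8 \<Rightarrow> mat8 \<Rightarrow> mat8) \<Rightarrow> bool" where
  "almost_complex_structure M T J \<longleftrightarrow>
     (\<forall>x\<in>M. linear (J x) \<and> (\<forall>v\<in>T x. J x v \<in> T x \<and> J x (J x v) = - v)) \<and>
     (\<forall>v. continuous_on M (\<lambda>x. J x v))"

text \<open>K-invariance: J commutes with the differential of the left action of K,
  which for x \<mapsto> Ad k x is v \<mapsto> Ad k v.\<close>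
definition K_invariant_acs :: "(mat8 \<Rightarrow> mat8 \<Rightarrow> mat8) \<Rightarrow> bool" where
  "K_invariant_acs J \<longleftrightarrow>
     (\<forall>k\<in>K_grp. \<forall>x\<in>flag_Theta. \<forall>v\<in>tangent_space x.
        J (Ad k x) (Ad k v) = Ad k (J x v))"

end

theory Submission
  imports Defs
begin

definition mono_m :: "('n::finite \<Rightarrow> 'n) \<Rightarrow> ('n \<Rightarrow> real) \<Rightarrow> real^'n^'n" where
  "mono_m \<tau> c = (\<chi> i j. if j = \<tau> i then c i else 0)"

lemma mono_left: "(mono_m \<tau> c ** X) $ i $ j = c i * X $ (\<tau> i) $ j"
  by (simp add: matrix_matrix_mult_def mono_m_def if_distrib[of "\<lambda>x. x * _"] sum.delta cong: if_cong)

lemma mono_right: assumes "\<And>x. \<tau> (\<tau> x) = x"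
  shows "(X ** mono_m \<tau> c) $ i $ j = X $ i $ (\<tau> j) * c (\<tau> j)"
proof -
  have "\<And>k. (j = \<tau> k) = (k = \<tau> j)" using assms by metis
  then show ?thesis
    by (simp add: matrix_matrix_mult_def mono_m_def if_distrib[of "\<lambda>x. _ * x"] sum.delta cong: if_cong)
qed

lemma matrix_inv_invol: fixes A :: "real^'n^'n" assumes "A ** A = mat 1" shows "matrix_inv A = A"
proof -
  let ?P = "\<lambda>A'. A ** A' = mat 1 \<and> A' ** A = mat 1"
  have "?P (matrix_inv A)" unfolding matrix_inv_def by (rule someI[of ?P A]) (use assms in auto)
  then have "matrix_inv A = matrix_inv A ** (A ** A)" using assms by simp
  also have "\<dots> = A" by (simp add: matrix_mul_assoc \<open>?P (matrix_inv A)\<close>)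
  finally show ?thesis .
qed

lemma exhaust_8:
  fixes x :: 8
  shows "x = 0 \<or> x = 1 \<or> x = 2 \<or> x = 3 \<or> x = 4 \<or> x = 5 \<or> x = 6 \<or> x = 7"
proof (induct x)
  case (of_int z)
  then have "z = 0 \<or> z = 1 \<or> z = 2 \<or> z = 3 \<or> z = 4 \<or> z = 5 \<or> z = 6 \<or> z = 7" by fastforce
  then show ?case by auto
qed

lemma forall_8: "(\<forall>i::8. P i) \<longleftrightarrow> P 0 \<and> P 1 \<and> P 2 \<and> P 3 \<and> P 4 \<and> P 5 \<and> P 6 \<and> P 7"
  by (metis exhaust_8)

lemmas ev8 = less_bit0_def bit0.Rep_numeral bit0.Rep_0 bit0.Rep_1

definition tau4 :: "8 \<Rightarrow> 8" where "tau4 i = i + 4"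
lemma tau4_invol: "tau4 (tau4 x) = x"
  using exhaust_8[of x] by (auto simp: tau4_def)

lemma Omega_mono: "Omega = mono_m tau4 (\<lambda>i. if i < 4 then 1 else -1)"
  unfolding Omega_def mono_m_def tau4_def ..


definition hv :: "8 \<Rightarrow> real" where
  "hv i = (if i < 2 then 2 else if i < 4 then 1 else if i < 6 then -2 else -1)"

lemma H_mono: "H_Theta = mono_m id hv"
  unfolding H_Theta_def mono_m_def hv_def by (simp add: vec_eq_iff)

definition sg :: "8 \<Rightarrow> 8 \<Rightarrow> real" where
  "sg m i = (if i = m \<or> i = m + 4 then -1 else 1)"

definition sigma :: "8 \<Rightarrow> 8" where
  "sigma i = (if i = 0 then 1 else if i = 1 then 0 else if i = 4 then 5 else if i = 5 then 4 else i)"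

lemma sigma_invol: "sigma (sigma x) = x"
  using exhaust_8[of x] by (auto simp: sigma_def)

definition Y0 :: mat8 where
  "Y0 = (\<chi> i j. if (i = 4 \<and> j = 0) \<or> (i = 1 \<and> j = 5) then 1
        else if (i = 0 \<and> j = 4) \<or> (i = 5 \<and> j = 1) then -1 else 0)"

lemma transpose_mono_id: "transpose (mono_m id c) = mono_m id c"
  by (auto simp: vec_eq_iff transpose_def mono_m_def)

lemma transpose_P: "transpose (mono_m sigma (\<lambda>_. 1)) = mono_m sigma (\<lambda>_. 1)"
  using sigma_invol by (auto simp: vec_eq_iff transpose_def mono_m_def)

lemma mat1_entry: "(mat 1 :: real^'n^'n) $ i $ j = (if i = j then 1 else 0)"
  by (simp add: mat_def)

lemma mono_entry: "mono_m \<tau> c $ i $ j = (if j = \<tau> i then c i else 0)"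
  by (simp add: mono_m_def)

lemma S_sq: "mono_m id (sg m) ** mono_m id (sg m) = mat 1"
  by (simp add: vec_eq_iff mono_left mat1_entry mono_entry sg_def)

lemma P_sq: "mono_m sigma (\<lambda>_. 1) ** mono_m sigma (\<lambda>_. 1) = mat 1"
  using sigma_invol by (auto simp add: vec_eq_iff mono_left mat1_entry mono_entry)

lemma Omega_entry: "Omega $ i $ j = (if j = i + 4 then (if i < 4 then 1 else -1) else 0)"
  by (simp add: Omega_def)


lemma lt4: "(0::8) < 4" "(1::8) < 4" "(2::8) < 4" "(3::8) < 4" "\<not> (4::8) < 4" "\<not> (5::8) < 4" "\<not> (6::8) < 4" "\<not> (7::8) < 4"
  by (simp_all add: ev8)
lemma lt2: "(0::8) < 2" "(1::8) < 2" "\<not>(2::8) < 2" "\<not>(3::8) < 2" "\<not> (4::8) < 2" "\<not> (5::8) < 2" "\<not> (6::8) < 2" "\<not> (7::8) < 2"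
  by (simp_all add: ev8)
lemma lt6: "(0::8) < 6" "(1::8) < 6" "(2::8) < 6" "(3::8) < 6" "(4::8) < 6" "(5::8) < 6" "\<not> (6::8) < 6" "\<not> (7::8) < 6"
  by (simp_all add: ev8)

lemma S_K: "mono_m id (sg m) \<in> K_grp"
proof -
  have "transpose (mono_m id (sg m)) ** Omega ** mono_m id (sg m) = Omega"
  proof (intro iffD2[OF vec_eq_iff] allI)
    fix i j :: 8
    have e: "sg m (i + 4) = sg m i"
      unfolding sg_def using tau4_invol[of i] tau4_invol[of m] unfolding tau4_def by metis
    show "(transpose (mono_m id (sg m)) ** Omega ** mono_m id (sg m)) $ i $ j = Omega $ i $ j"
      unfolding transpose_mono_id mono_right[of id, simplified] mono_left
      by (auto simp: Omega_entry e sg_def)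
  qed
  then show ?thesis unfolding K_grp_def Sp_grp_def by (simp add: S_sq transpose_mono_id)
qed


lemma n8: "(8::8) = 0" "(9::8) = 1" "(10::8) = 2" "(11::8) = 3"
  by simp_all

lemma sigma_plus4: "sigma (i + 4) = sigma i + 4"
  using exhaust_8[of i] by (auto simp: sigma_def)
lemma sigma_lt4: "(sigma i < 4) = (i < 4)"
  using exhaust_8[of i] by (auto simp: sigma_def lt4)

lemma P_K: "mono_m sigma (\<lambda>_. 1) \<in> K_grp"
proof -
  have "transpose (mono_m sigma (\<lambda>_. 1)) ** Omega ** mono_m sigma (\<lambda>_. 1) = Omega"
  proof (intro iffD2[OF vec_eq_iff] allI)
    fix i j :: 8
    have e: "(sigma j = sigma i + 4) = (j = i + 4)"
      by (metis sigma_plus4 sigma_invol)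
    show "(transpose (mono_m sigma (\<lambda>_. 1)) ** Omega ** mono_m sigma (\<lambda>_. 1)) $ i $ j = Omega $ i $ j"
      unfolding transpose_P mono_right[of sigma, OF sigma_invol] mono_left
      by (simp add: Omega_entry e sigma_lt4)
  qed
  then show ?thesis unfolding K_grp_def Sp_grp_def by (simp add: P_sq transpose_P)
qed

lemma Y0_entry: "Y0 $ i $ j = (if (i = 4 \<and> j = 0) \<or> (i = 1 \<and> j = 5) then 1
        else if (i = 0 \<and> j = 4) \<or> (i = 5 \<and> j = 1) then -1 else 0)"
  by (simp add: Y0_def)

lemma Y0_k: "Y0 \<in> k_alg"
proof -
  have a: "transpose Y0 = - Y0"
    by (auto simp: vec_eq_iff transpose_def Y0_entry)
  have b: "transpose Y0 ** Omega + Omega ** Y0 = 0"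
    unfolding Omega_mono a
    by (simp add: vec_eq_iff mono_left mono_right[of tau4, OF tau4_invol] tau4_def forall_8 Y0_entry lt4 n8)
  show ?thesis unfolding k_alg_def sp_alg_def using a b by simp
qed


lemma Ad_S: "Ad (mono_m id (sg m)) X $ i $ j = sg m i * X $ i $ j * sg m j"
  unfolding Ad_def matrix_inv_invol[OF S_sq] mono_right[of id, simplified] mono_left by simp

lemma Ad_P: "Ad (mono_m sigma (\<lambda>_. 1)) X $ i $ j = X $ (sigma i) $ (sigma j)"
  unfolding Ad_def matrix_inv_invol[OF P_sq] mono_right[of sigma, OF sigma_invol] mono_left by simp

lemma comm_entry: "(Y ** H_Theta - H_Theta ** Y) $ i $ j = Y $ i $ j * (hv j - hv i)"
  by (simp add: H_mono mono_right[of id, simplified] mono_left algebra_simps)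

lemma hv_sigma: "hv (sigma i) = hv i"
  using exhaust_8[of i] by (auto simp: sigma_def hv_def lt4 lt2 lt6)

lemma sg_sq: "sg m i * sg m i = 1"
  by (simp add: sg_def)

lemma H_entry: "H_Theta $ i $ j = (if j = i then hv i else 0)"
  by (simp add: H_mono mono_entry)

lemma Ad_S_H: "Ad (mono_m id (sg m)) H_Theta = H_Theta"
  by (auto simp: vec_eq_iff Ad_S H_entry sg_sq)

lemma Ad_P_H: "Ad (mono_m sigma (\<lambda>_. 1)) H_Theta = H_Theta"
proof -
  have "\<And>i j::8. (sigma j = sigma i) = (j = i)" by (metis sigma_invol)
  then show ?thesis by (auto simp: vec_eq_iff Ad_P H_entry hv_sigma)
qed

definition v0 :: mat8 where "v0 = Y0 ** H_Theta - H_Theta ** Y0"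

lemma v0_entry: "v0 $ i $ j = Y0 $ i $ j * (hv j - hv i)"
  unfolding v0_def comm_entry ..

lemma Ad_S_v0: assumes "m \<in> {0,1,2,3}" shows "Ad (mono_m id (sg m)) v0 = v0"
  using assms by (auto simp: vec_eq_iff Ad_S v0_entry Y0_entry sg_def n8)

lemma Y0_sigma: "Y0 $ (sigma i) $ (sigma j) = - Y0 $ i $ j"
  using exhaust_8[of i] exhaust_8[of j] by (auto simp: sigma_def Y0_entry)

lemma Ad_P_v0: "Ad (mono_m sigma (\<lambda>_. 1)) v0 = - v0"
  by (simp add: vec_eq_iff Ad_P v0_entry hv_sigma Y0_sigma)

lemma hv_vals: "hv 0 = 2" "hv 1 = 2" "hv 4 = -2" "hv 5 = -2"
  by (simp_all add: hv_def lt4 lt2 lt6)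

lemma v0_04: "v0 $ 0 $ 4 = 4"
  by (simp add: v0_entry Y0_entry hv_vals)

lemma mat1_K: "mat 1 \<in> K_grp"
  by (simp add: K_grp_def Sp_grp_def transpose_mat)

lemma H_flag: "H_Theta \<in> flag_Theta"
proof -
  have "Ad (mat 1) H_Theta = H_Theta"
    unfolding Ad_def by (simp add: matrix_inv_invol)
  then show ?thesis unfolding flag_Theta_def using mat1_K by force
qed

theorem proposition6:
  shows "\<not> (\<exists>J. almost_complex_structure flag_Theta tangent_space J \<and> K_invariant_acs J)"
proof
  assume "\<exists>J. almost_complex_structure flag_Theta tangent_space J \<and> K_invariant_acs J"
  then obtain J where acs: "almost_complex_structure flag_Theta tangent_space J"
    and inv: "K_invariant_acs J" by blast
  have lin: "linear (J H_Theta)" and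
    cl: "\<And>u. u \<in> tangent_space H_Theta \<Longrightarrow> J H_Theta u \<in> tangent_space H_Theta \<and> J H_Theta (J H_Theta u) = - u"
    using acs H_flag unfolding almost_complex_structure_def by auto
  have vT: "v0 \<in> tangent_space H_Theta"
    unfolding tangent_space_def v0_def using Y0_k by blast
  define w where "w = J H_Theta v0"
  have wT: "w \<in> tangent_space H_Theta" and wJ: "J H_Theta w = - v0"
    using cl[OF vT] unfolding w_def by auto
  obtain Y where Yk: "Y \<in> k_alg" and wY: "w = Y ** H_Theta - H_Theta ** Y"
    using wT unfolding tangent_space_def by blast
  have Ya: "\<And>i j. Y $ j $ i = - Y $ i $ j"
  proof -
    fix i j
    have "transpose Y = - Y" using Yk unfolding k_alg_def by simp
    then have "transpose Y $ i $ j = (- Y) $ i $ j" by simp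
    then show "Y $ j $ i = - Y $ i $ j" by (simp add: transpose_def)
  qed
  have we: "\<And>i j. w $ i $ j = Y $ i $ j * (hv j - hv i)"
    unfolding wY comm_entry ..
  have wS: "Ad (mono_m id (sg m)) w = w" if "m \<in> {0,1,2,3}" for m
    using inv S_K[of m] H_flag vT Ad_S_H Ad_S_v0[OF that] unfolding K_invariant_acs_def w_def
    by metis
  have wP: "Ad (mono_m sigma (\<lambda>_. 1)) w = - w"
  proof -
    have "J H_Theta (- v0) = Ad (mono_m sigma (\<lambda>_. 1)) w"
      using inv P_K H_flag vT Ad_P_H Ad_P_v0 unfolding K_invariant_acs_def w_def by metis
    then show ?thesis using real_vector.linear_neg[OF lin] unfolding w_def by simp
  qed
  have zr: "sg m i * sg m j = -1 \<Longrightarrow> w $ i $ j = 0" if "m \<in> {0,1,2,3}" for m i j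
  proof -
    assume a: "sg m i * sg m j = -1"
    have "sg m i * w $ i $ j * sg m j = w $ i $ j"
      using wS[OF that] by (metis Ad_S)
    then have "- w $ i $ j = w $ i $ j" using a by (simp add: algebra_simps)
    then show ?thesis by simp
  qed
  have z0: "sg 0 i * sg 0 j = -1 \<Longrightarrow> w $ i $ j = 0" for i j using zr[of 0] by simp
  have z1: "sg 1 i * sg 1 j = -1 \<Longrightarrow> w $ i $ j = 0" for i j using zr[of 1] by simp
  have z2: "sg 2 i * sg 2 j = -1 \<Longrightarrow> w $ i $ j = 0" for i j using zr[of 2] by simp
  have z3: "sg 3 i * sg 3 j = -1 \<Longrightarrow> w $ i $ j = 0" for i j using zr[of 3] by simp
  have wPe: "w $ (sigma i) $ (sigma j) = - w $ i $ j" for i j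
    using wP by (metis Ad_P vector_uminus_component)
  have d: "w $ i $ i = 0" for i using we[of i i] by simp
  have e1: "w $ 4 $ 0 = w $ 0 $ 4" using we[of 4 0] we[of 0 4] Ya[of 0 4] hv_vals by simp
  have e2: "w $ 5 $ 1 = w $ 1 $ 5" using we[of 5 1] we[of 1 5] Ya[of 1 5] hv_vals by simp
  have e3: "w $ 1 $ 5 = - w $ 0 $ 4" using wPe[of 0 4] by (simp add: sigma_def)
  have e4: "w $ 2 $ 6 = 0" "w $ 6 $ 2 = 0" "w $ 3 $ 7 = 0" "w $ 7 $ 3 = 0"
    using wPe[of 2 6] wPe[of 6 2] wPe[of 3 7] wPe[of 7 3] by (simp_all add: sigma_def)
  define c where "c = w $ 0 $ 4 / 4"
  have wc: "w = c *\<^sub>R v0"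
    unfolding vec_eq_iff
    by (simp add: forall_8 c_def v0_entry Y0_entry hv_vals d e1 e2 e3 e4 z0 z1 z2 z3 sg_def n8)
  have "J H_Theta w = c *\<^sub>R w"
    using linear_cmul[OF lin] wc w_def by simp
  then have "- v0 = (c * c) *\<^sub>R v0" using wJ wc by simp
  then have "(- v0) $ 0 $ 4 = ((c * c) *\<^sub>R v0) $ 0 $ 4" by simp
  then have "- 4 = c * c * 4" using v0_04 by simp
  moreover have "c * c \<ge> 0" by simp
  ultimately show False by linarith
qed

end
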